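(* Let $D_1,\dots,D_n$ be semi-interlaced in a finite set $\mathbf P\subset\mathbb Z^n$ with $P=\operatorname{Conv}\mathbf P$. Let $S$ be a suture, and let $J=\{j_1,\dots,j_{n-\dim S}\}$ be the set of indices $j$ with $D_j\cap S=\emptyset$. For every $\xi\in(\pi_S(\mathbb R^n))^*$ with $\pi_S(P)^\xi=\mathbf O_S$, at least $\dim\big((\mathbf P_S\setminus\{\mathbf O_S\})^\xi\big)+1$ of the polytopes $\pi_S(D_{j_1}),\dots,\pi_S(D_{j_{n-\dim S}})$ intersect $(\mathbf P_S\setminus\{\mathbf O_S\})^\xi$.
   Context: **Notation.** $\pi_S:\mathbb R^n\to\mathbb R^n/\operatorname{aff}(S)$ sends $\operatorname{aff}(S)$ to the origin. For a finite set or polytope $Q$ and covector $\xi$, $Q^\xi$ is the subset (face) where $\xi$ attains its maximum; the dimension of a finite set is that of its convex hull. **Sets attached to $S$.** - $\mathbf O_S=\pi_S(S)$, a point. - $\mathbf P_S=\pi_S(\mathbf P)\cap\overline{\pi_S(P)\setminus\pi_S(\operatorname{Conv}(\mathbf P\setminus S))}$, where the overline denotes closure. **Daughter polytope.** For a nonempty polytope $D$ with vertices in $\mathbf P$, $\mathcal D(D)$ is the set of inclusion-maximal faces of $P$ disjoint from $D$. $D$ is a daughter polytope if: 1. distinct members of $\mathcal D(D)$ are disjoint; 2. $D=\operatorname{Conv}(\mathbf P\setminus\bigcup_{F\in\mathcal D(D)}F)$. **Semi-interlaced and sutures.** Daughter polytopes $D_1,\dots,D_n$ of $\mathbf P\subset\mathbb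 Z^n$ are semi-interlaced if every face $F$ of $P$ meets at least $\dim F$ of them. A suture is a face meeting exactly $\dim F$ of them. *)

theory Defs
  imports "HOL-Analysis.Analysis"
begin

text \<open>The quotient map pi_S : R^n -> R^n / aff(S), realised concretely as the map onto the
  orthogonal complement of the direction of aff(S): x is sent to x minus its closest point
  in the affine hull of S.\<close>
definition piS :: "('a::euclidean_space) set \<Rightarrow> 'a \<Rightarrow> 'a" where
  "piS S x = x - closest_point (affine hull S) x"

definition argmax_set :: "('a::real_inner) \<Rightarrow> 'a set \<Rightarrow> 'a set" where
  "argmax_set \<xi> Q = {x \<in> Q. \<forall>y\<in>Q. \<xi> \<bullet> y \<le> \<xi> \<bullet> x}"

definition O_S :: "('a::euclidean_space) set \<Rightarrow> 'a set" where
  "O_S S = piS S ` S"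

text \<open>The set P_S attached to S (bold P = the finite point set Pt, P = its convex hull).\<close>
definition P_S :: "('a::euclidean_space) set \<Rightarrow> 'a set \<Rightarrow> 'a set" where
  "P_S Pt S = piS S ` Pt \<inter>
     closure (piS S ` (convex hull Pt) - piS S ` (convex hull (Pt - S)))"

definition daughter_family :: "('a::euclidean_space) set \<Rightarrow> 'a set \<Rightarrow> 'a set set" where
  "daughter_family Pt D = {F. F face_of convex hull Pt \<and> F \<inter> D = {} \<and>
       (\<forall>G. G face_of convex hull Pt \<and> G \<inter> D = {} \<and> F \<subseteq> G \<longrightarrow> G = F)}"

definition daughter_polytope :: "('a::euclidean_space) set \<Rightarrow> 'a set \<Rightarrow> bool" where
  "daughter_polytope Pt D \<longleftrightarrow>
     (\<exists>V. V \<subseteq> Pt \<and> V \<noteq> {} \<and> D = convex hull V) \<and>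
     (\<forall>F\<in>daughter_family Pt D. \<forall>G\<in>daughter_family Pt D. F \<noteq> G \<longrightarrow> F \<inter> G = {}) \<and>
     D = convex hull (Pt - \<Union>(daughter_family Pt D))"

definition semi_interlaced :: "(real^'n) set \<Rightarrow> (nat \<Rightarrow> (real^'n) set) \<Rightarrow> bool" where
  "semi_interlaced Pt D \<longleftrightarrow>
     (\<forall>i\<in>{1..CARD('n)}. daughter_polytope Pt (D i)) \<and>
     (\<forall>F. F face_of convex hull Pt \<longrightarrow>
          aff_dim F \<le> int (card {i\<in>{1..CARD('n)}. D i \<inter> F \<noteq> {}}))"

definition suture :: "(real^'n) set \<Rightarrow> (nat \<Rightarrow> (real^'n) set) \<Rightarrow> (real^'n) set \<Rightarrow> bool" where
  "suture Pt D S \<longleftrightarrow> S face_of convex hull Pt \<and>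
     aff_dim S = int (card {i\<in>{1..CARD('n)}. D i \<inter> S \<noteq> {}})"

end

theory Submission
  imports Defs
begin

lemma cp_in:
  fixes S :: "'a::euclidean_space set"
  assumes "S \<noteq> {}"
  shows "closest_point (affine hull S) x \<in> affine hull S"
  using assms by (intro closest_point_in_set) (auto simp: affine_hull_eq_empty)

lemma cp_orth:
  fixes S :: "'a::euclidean_space set"
  assumes "S \<noteq> {}" "z \<in> affine hull S"
  shows "(x - closest_point (affine hull S) x) \<bullet> (z - closest_point (affine hull S) x) = 0"
proof -
  let ?A = "affine hull S" let ?c = "closest_point ?A x"
  have c: "?c \<in> ?A" using cp_in[OF assms(1)] .
  have cv: "convex ?A" by (simp add: affine_imp_convex)
  have 1: "(x - ?c) \<bullet> (z - ?c) \<le> 0"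
    by (rule closest_point_dot[OF cv closed_affine_hull assms(2)])
  have z2: "2 *\<^sub>R ?c + (-1) *\<^sub>R z \<in> ?A"
    by (rule mem_affine) (use c assms(2) in auto)
  have 2: "(x - ?c) \<bullet> ((2 *\<^sub>R ?c + (-1) *\<^sub>R z) - ?c) \<le> 0"
    by (rule closest_point_dot[OF cv closed_affine_hull z2])
  have eq: "(2 *\<^sub>R ?c + (-1) *\<^sub>R z) - ?c = - (z - ?c)" by (simp add: algebra_simps scaleR_2)
  have "(x - ?c) \<bullet> (- (z - ?c)) \<le> 0" using 2 unfolding eq .
  then have "(x - ?c) \<bullet> (z - ?c) \<ge> 0" by (simp add: inner_diff_right)
  with 1 show ?thesis by linarith
qed

lemma cp_char:
  fixes S :: "'a::euclidean_space set"
  assumes "S \<noteq> {}" "y \<in> affine hull S" "\<And>z. z \<in> affine hull S \<Longrightarrow> (x - y) \<bullet> (z - y) = 0"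
  shows "closest_point (affine hull S) x = y"
proof -
  have cv: "convex (affine hull S)" by (simp add: affine_imp_convex)
  have "\<forall>z\<in>affine hull S. dist x y \<le> dist x z"
  proof
    fix z assume z: "z \<in> affine hull S"
    have o: "(x - y) \<bullet> (z - y) = 0" using assms(3)[OF z] .
    have "(x - z) \<bullet> (x - z) = ((x - y) - (z - y)) \<bullet> ((x - y) - (z - y))" by simp
    also have "\<dots> = (x - y) \<bullet> (x - y) - 2 * ((x - y) \<bullet> (z - y)) + (z - y) \<bullet> (z - y)"
      by (simp add: inner_diff_left inner_diff_right inner_commute)
    finally have "(x - z) \<bullet> (x - z) = (x - y) \<bullet> (x - y) + (z - y) \<bullet> (z - y)" using o by simp
    then have "(x - y) \<bullet> (x - y) \<le> (x - z) \<bullet> (x - z)" by simp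
    then show "dist x y \<le> dist x z" by (simp add: dist_norm norm_le)
  qed
  then show ?thesis
    using closest_point_unique[OF cv closed_affine_hull assms(2)] by simp
qed

lemma piS_self:
  fixes S :: "'a::euclidean_space set"
  assumes "x \<in> affine hull S"
  shows "piS S x = 0"
  unfolding piS_def closest_point_self[OF assms] by simp
lemma hs:
  fixes S :: "'a::euclidean_space set"
  assumes "s0 \<in> S"
  shows "s0 \<in> affine hull S"
  using hull_subset[of S affine] assms by (rule subsetD)
lemma piS_linear:
  fixes S :: "'a::euclidean_space set"
  assumes "s0 \<in> S"
  shows "linear (\<lambda>x. piS S (x + s0))"
proof -
  have ne: "S \<noteq> {}" using assms by auto
  let ?A = "affine hull S"
  let ?c = "\<lambda>x. closest_point ?A (x + s0)"
  have s0A: "s0 \<in> ?A" by (rule hs[OF assms])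
  have aff: "affine ?A" by (rule affine_affine_hull)
  have cA: "\<And>x. ?c x \<in> ?A" using cp_in[OF ne] .
  have orth: "\<And>x z. z \<in> ?A \<Longrightarrow> (x + s0 - ?c x) \<bullet> (z - ?c x) = 0"
    by (rule cp_orth[OF ne])
  have add: "?c (x + y) = ?c x + (?c y - s0)" for x y
  proof (rule cp_char[OF ne])
    show "?c x + (?c y - s0) \<in> ?A"
      using mem_affine_3_minus[OF aff cA[of x] cA[of y] s0A, of 1] by simp
    fix z assume z: "z \<in> ?A"
    have z1: "z + 1 *\<^sub>R (s0 - ?c y) \<in> ?A"
      using mem_affine_3_minus[OF aff z s0A cA[of y]] .
    have z2: "z + 1 *\<^sub>R (s0 - ?c x) \<in> ?A"
      using mem_affine_3_minus[OF aff z s0A cA[of x]] .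
    have o1: "(x + s0 - ?c x) \<bullet> ((z + (s0 - ?c y)) - ?c x) = 0" using orth[OF z1] by simp
    have o2: "(y + s0 - ?c y) \<bullet> ((z + (s0 - ?c x)) - ?c y) = 0" using orth[OF z2] by simp
    let ?q = "?c x + (?c y - s0)"
    have h1: "x + y + s0 - ?q = (x + s0 - ?c x) + (y + s0 - ?c y)" by (simp add: algebra_simps)
    have h2: "z - ?q = (z + (s0 - ?c y)) - ?c x" by (simp add: algebra_simps)
    have h3: "z - ?q = (z + (s0 - ?c x)) - ?c y" by (simp add: algebra_simps)
    have "(x + y + s0 - ?q) \<bullet> (z - ?q) = (x + s0 - ?c x) \<bullet> (z - ?q) + (y + s0 - ?c y) \<bullet> (z - ?q)"
      by (simp only: h1 inner_add_left)
    also have "\<dots> = 0"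
    proof -
      have "(x + s0 - ?c x) \<bullet> (z - ?q) = 0" by (subst h2) (rule o1)
      moreover have "(y + s0 - ?c y) \<bullet> (z - ?q) = 0" by (subst h3) (rule o2)
      ultimately show ?thesis by simp
    qed
    finally show "(x + y + s0 - ?q) \<bullet> (z - ?q) = 0" .
  qed
  have scale: "?c (r *\<^sub>R x) = (1 - r) *\<^sub>R s0 + r *\<^sub>R ?c x" for r x
  proof (rule cp_char[OF ne])
    show "(1 - r) *\<^sub>R s0 + r *\<^sub>R ?c x \<in> ?A"
      by (rule mem_affine[OF aff s0A cA]) simp
    fix z assume z: "z \<in> ?A"
    let ?u = "x + s0 - ?c x"
    have a1: "?u \<bullet> (z - ?c x) = 0" using orth[OF z] .
    have a2: "?u \<bullet> (s0 - ?c x) = 0" using orth[OF s0A] .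
    have a3: "?u \<bullet> (z - s0) = 0"
    proof -
      have "z - s0 = (z - ?c x) - (s0 - ?c x)" by simp
      then show ?thesis using a1 a2 by (simp add: inner_diff_right)
    qed
    have e1: "r *\<^sub>R x + s0 - ((1 - r) *\<^sub>R s0 + r *\<^sub>R ?c x) = r *\<^sub>R ?u"
      by (simp add: algebra_simps)
    have e2: "z - ((1 - r) *\<^sub>R s0 + r *\<^sub>R ?c x) = (z - s0) + r *\<^sub>R (s0 - ?c x)"
      by (simp add: algebra_simps)
    show "(r *\<^sub>R x + s0 - ((1 - r) *\<^sub>R s0 + r *\<^sub>R ?c x)) \<bullet> (z - ((1 - r) *\<^sub>R s0 + r *\<^sub>R ?c x)) = 0"
      unfolding e1 e2 using a2 a3 by (simp add: inner_add_right)
  qed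
  show ?thesis
  proof (rule linearI)
    fix x y show "piS S (x + y + s0) = piS S (x + s0) + piS S (y + s0)"
      unfolding piS_def using add[of x y] by (simp add: algebra_simps)
  next
    fix r x show "piS S (r *\<^sub>R x + s0) = r *\<^sub>R piS S (x + s0)"
      unfolding piS_def using scale[of r x] by (simp add: algebra_simps)
  qed
qed


lemma e_rep:
  fixes S :: "'a::euclidean_space set"
  assumes "s0 \<in> S"
  shows "\<exists>w c. \<forall>x. \<xi> \<bullet> piS S x = w \<bullet> x + c"
proof -
  let ?L = "\<lambda>x. piS S (x + s0)"
  have lin: "linear ?L" by (rule piS_linear[OF assms])
  have "\<forall>x. \<xi> \<bullet> piS S x = adjoint ?L \<xi> \<bullet> x + (- (\<xi> \<bullet> ?L s0))"
  proof
    fix x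
    have "piS S x = ?L (x - s0)" by simp
    also have "\<dots> = ?L x - ?L s0" by (rule linear_diff[OF lin])
    finally have 1: "piS S x = ?L x - ?L s0" .
    have 3: "x \<bullet> adjoint ?L \<xi> = ?L x \<bullet> \<xi>" by (rule adjoint_works[OF lin])
    show "\<xi> \<bullet> piS S x = adjoint ?L \<xi> \<bullet> x + (- (\<xi> \<bullet> ?L s0))"
      unfolding 1 using 3 by (simp only: inner_diff_right inner_commute)
  qed
  then show ?thesis by blast
qed

lemma piS_orth:
  fixes S :: "'a::euclidean_space set"
  assumes "S \<noteq> {}" "u \<in> affine hull S" "v \<in> affine hull S"
  shows "piS S x \<bullet> (v - u) = 0"
proof -
  let ?c = "closest_point (affine hull S) x"
  have 1: "(x - ?c) \<bullet> (v - ?c) = 0" by (rule cp_orth[OF assms(1,3)])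
  have 2: "(x - ?c) \<bullet> (u - ?c) = 0" by (rule cp_orth[OF assms(1,2)])
  have "v - u = (v - ?c) - (u - ?c)" by simp
  then have "(x - ?c) \<bullet> (v - u) = (x - ?c) \<bullet> (v - ?c) - (x - ?c) \<bullet> (u - ?c)"
    by (simp only: inner_diff_right)
  then show ?thesis unfolding piS_def using 1 2 by simp
qed

lemma dim_proj:
  fixes S X :: "'a::euclidean_space set"
  assumes ne: "S \<noteq> {}" and m: "m \<noteq> 0" and X: "\<forall>x\<in>X. \<xi> \<bullet> piS S x = m"
  shows "aff_dim (piS S ` X) + 1 + aff_dim S \<le> aff_dim (S \<union> X)"
proof -
  obtain s0 where s0: "s0 \<in> S" using ne by blast
  define f where "f = (\<lambda>y::'a. y - s0)"
  define U where "U = span (f ` (S \<union> X))"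
  define V where "V = span (f ` S)"
  define W where "W = {y \<in> U. \<forall>x\<in>V. orthogonal x y}"
  have s0h: "s0 \<in> affine hull S" by (rule hs[OF s0])
  have s0h2: "s0 \<in> affine hull (S \<union> X)" using hs[of s0 "S \<union> X"] s0 by simp
  have dU: "aff_dim (S \<union> X) = int (dim U)"
    unfolding U_def f_def dim_span using aff_dim_eq_dim_subtract[OF s0h2] .
  have dV: "aff_dim S = int (dim V)"
    unfolding V_def f_def dim_span using aff_dim_eq_dim_subtract[OF s0h] .
  have sU: "subspace U" unfolding U_def by (rule subspace_span)
  have sV: "subspace V" unfolding V_def by (rule subspace_span)
  have VU: "V \<subseteq> U" unfolding U_def V_def by (intro span_mono image_mono) simp
  have dW: "dim W + dim V = dim U"
    unfolding W_def by (rule dim_subspace_orthogonal_to_vectors[OF sV sU VU])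
  have W_eq: "W = U \<inter> {y. \<forall>x\<in>V. orthogonal x y}" unfolding W_def by blast
  have sW: "subspace W" unfolding W_eq by (intro subspace_inter sU subspace_orthogonal_to_vectors)
  have ahS: "affine hull S = (\<lambda>x. s0 + x) ` span ((\<lambda>x. - s0 + x) ` S)"
    by (rule affine_hull_span_gen[OF s0h])
  have fS: "(\<lambda>x. - s0 + x) ` S = f ` S" unfolding f_def by (simp add: algebra_simps)
  have sub: "insert 0 (piS S ` X) \<subseteq> W"
  proof
    fix y assume y: "y \<in> insert 0 (piS S ` X)"
    show "y \<in> W"
    proof (cases "y = 0")
      case True then show ?thesis using sW subspace_0 by blast
    next
      case False
      then obtain x where x: "x \<in> X" "y = piS S x" using y by blast
      let ?c = "closest_point (affine hull S) x"
      have cA: "?c \<in> affine hull S" by (rule cp_in[OF ne])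
      then obtain v where v: "v \<in> V" "?c = s0 + v" unfolding ahS fS V_def by blast
      have xU: "x - s0 \<in> U" unfolding U_def f_def using x(1) by (intro span_base) blast
      have vU: "v \<in> U" using v(1) VU by blast
      have yeq: "y = (x - s0) - v" unfolding x(2) piS_def using v(2) by (simp add: algebra_simps)
      have yU: "y \<in> U" unfolding yeq by (rule subspace_diff[OF sU xU vU])
      have orth: "\<forall>z\<in>V. orthogonal z y"
      proof
        fix z assume z: "z \<in> V"
        have "orthogonal y z" unfolding V_def
        proof (rule orthogonal_to_span[OF z[unfolded V_def]])
          fix u assume "u \<in> f ` S"
          then obtain s where s: "s \<in> S" "u = s - s0" unfolding f_def by blast
          have sh: "s \<in> affine hull S" by (rule hs[OF s(1)])
          show "orthogonal y u" unfolding orthogonal_def s(2) x(2)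
            by (rule piS_orth[OF ne s0h sh])
        qed
        then show "orthogonal z y" by (simp add: orthogonal_commute)
      qed
      show ?thesis unfolding W_def using yU orth by blast
    qed
  qed
  have notin: "0 \<notin> affine hull (piS S ` X)"
  proof -
    have "affine hull (piS S ` X) \<subseteq> {y. \<xi> \<bullet> y = m}"
      by (rule hull_minimal) (use X in \<open>auto simp: affine_hyperplane\<close>)
    then show ?thesis using m by auto
  qed
  have "aff_dim (insert 0 (piS S ` X)) = aff_dim (piS S ` X) + 1"
    using aff_dim_insert[of 0 "piS S ` X"] notin by simp
  moreover have "aff_dim (insert 0 (piS S ` X)) \<le> aff_dim W" by (rule aff_dim_subset[OF sub])
  moreover have "aff_dim W = int (dim W)" by (rule aff_dim_subspace[OF sW])
  ultimately show ?thesis using dU dV dW by linarith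
qed


lemma exposed_ch:
  fixes Pt :: "'a::euclidean_space set"
  assumes "finite Pt" "F face_of convex hull Pt"
  obtains a b where "convex hull Pt \<subseteq> {x. a \<bullet> x \<le> b}" "F = convex hull Pt \<inter> {x. a \<bullet> x = b}"
proof -
  have "F exposed_face_of convex hull Pt"
    using exposed_face_of_polyhedron[OF polytope_imp_polyhedron[OF polytope_convex_hull[OF assms(1)]]] assms(2)
    by simp
  then show ?thesis unfolding exposed_face_of_def using that by blast
qed

lemma face_meets_Pt:
  fixes Pt :: "'a::euclidean_space set"
  assumes "finite Pt" "S face_of convex hull Pt" "S \<noteq> {}"
  shows "Pt \<inter> S \<noteq> {}"
proof (rule ccontr)
  assume "\<not> Pt \<inter> S \<noteq> {}"
  then have none: "Pt \<inter> S = {}" by simp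
  obtain a b where ab1: "convex hull Pt \<subseteq> {x. a \<bullet> x \<le> b}" and ab2: "S = convex hull Pt \<inter> {x. a \<bullet> x = b}"
    using exposed_ch[OF assms(1,2)] by blast
  have lt: "\<forall>p\<in>Pt. a \<bullet> p < b"
  proof
    fix p assume p: "p \<in> Pt"
    have pc: "p \<in> convex hull Pt" using p by (rule hull_inc)
    have le: "a \<bullet> p \<le> b" using ab1 pc by auto
    have nS: "p \<notin> S" using none p by auto
    have "a \<bullet> p \<noteq> b"
    proof
      assume "a \<bullet> p = b"
      then have "p \<in> S" using ab2 pc by simp
      with nS show False by simp
    qed
    with le show "a \<bullet> p < b" by simp
  qed
  have sub: "convex hull Pt \<subseteq> {x. a \<bullet> x < b}"
  proof (rule hull_minimal)
    show "Pt \<subseteq> {x. a \<bullet> x < b}" using lt by auto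
    show "convex {x. a \<bullet> x < b}" by (rule convex_halfspace_lt)
  qed
  have "S \<subseteq> {}"
  proof
    fix x assume "x \<in> S"
    then have "x \<in> convex hull Pt" "a \<bullet> x = b" using ab2 by auto
    with sub show "x \<in> {}" by auto
  qed
  with assms(3) show False by simp
qed

lemma face_aff:
  fixes Pt :: "'a::euclidean_space set"
  assumes "finite Pt" "S face_of convex hull Pt" "x \<in> convex hull Pt" "x \<in> affine hull S"
  shows "x \<in> S"
proof -
  obtain a b where ab: "convex hull Pt \<subseteq> {x. a \<bullet> x \<le> b}" "S = convex hull Pt \<inter> {x. a \<bullet> x = b}"
    using exposed_ch[OF assms(1,2)] by blast
  have "affine hull S \<subseteq> {x. a \<bullet> x = b}"
    by (rule hull_minimal) (use ab(2) in \<open>auto simp: affine_hyperplane\<close>)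
  then show ?thesis using assms(3,4) ab(2) by auto
qed

lemma fam_ext:
  fixes Pt :: "'a::euclidean_space set"
  assumes "finite Pt" "F face_of convex hull Pt" "F \<inter> D = {}"
  shows "\<exists>F'\<in>daughter_family Pt D. F \<subseteq> F'"
proof -
  let ?C = "{G. G face_of convex hull Pt \<and> G \<inter> D = {} \<and> F \<subseteq> G}"
  have "finite {G. G face_of convex hull Pt}"
    by (rule finite_polytope_faces[OF polytope_convex_hull[OF assms(1)]])
  then have fin: "finite ?C" by (rule rev_finite_subset) blast
  have ne: "?C \<noteq> {}" using assms(2,3) by blast
  obtain M where M: "M \<in> ?C" "\<forall>b\<in>?C. M \<subseteq> b \<longrightarrow> M = b"
    using finite_has_maximal[OF fin ne] by blast
  have "M \<in> daughter_family Pt D"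
    unfolding daughter_family_def
  proof (intro CollectI conjI allI impI)
    show "M face_of convex hull Pt" "M \<inter> D = {}" using M(1) by auto
  next
    fix G assume G: "G face_of convex hull Pt \<and> G \<inter> D = {} \<and> M \<subseteq> G"
    then have "G \<in> ?C" using M(1) by blast
    then show "G = M" using M(2) G by blast
  qed
  then show ?thesis using M(1) by blast
qed

lemma daughter_key:
  fixes Pt :: "'a::euclidean_space set"
  assumes fin: "finite Pt" and dp: "daughter_polytope Pt D"
    and Sf: "S face_of convex hull Pt" and Sne: "S \<noteq> {}" and SD: "S \<inter> D = {}"
    and e: "\<And>x. e x = w \<bullet> x + c"
    and e0: "\<And>x. x \<in> S \<Longrightarrow> e x = 0"
    and neg: "\<And>x. x \<in> Pt \<Longrightarrow> x \<notin> S \<Longrightarrow> e x < 0"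
    and le: "\<And>x. x \<in> Pt \<Longrightarrow> x \<notin> S \<Longrightarrow> e x \<le> m"
    and T: "T = {x\<in>Pt. x \<notin> S \<and> e x = m}"
    and DT: "D \<inter> T = {}"
  shows "\<exists>G. G face_of convex hull Pt \<and> G \<inter> D = {} \<and> S \<subseteq> G \<and> T \<subseteq> G"
proof -
  let ?P = "convex hull Pt"
  let ?fam = "daughter_family Pt D"
  obtain G where G: "G \<in> ?fam" "S \<subseteq> G" using fam_ext[OF fin Sf SD] by blast
  have Gf: "G face_of ?P" "G \<inter> D = {}" using G(1) unfolding daughter_family_def by auto
  have disj: "\<And>F1 F2. F1 \<in> ?fam \<Longrightarrow> F2 \<in> ?fam \<Longrightarrow> F1 \<noteq> F2 \<Longrightarrow> F1 \<inter> F2 = {}"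
    using dp unfolding daughter_polytope_def by blast
  define Vs where "Vs = Pt - \<Union>?fam"
  have Deq: "D = convex hull Vs"
    using dp[unfolded daughter_polytope_def] unfolding Vs_def by (rule conjunct2[THEN conjunct2])
  have VD: "Vs \<subseteq> D" unfolding Deq by (rule hull_subset)
  have "T \<subseteq> G"
  proof
    fix t assume t: "t \<in> T"
    have tP: "t \<in> Pt" "t \<notin> S" "e t = m" using t T by auto
    have "t \<notin> D" using DT t by blast
    then have "t \<in> \<Union>?fam" using VD tP(1) unfolding Vs_def by blast
    then obtain H where H: "H \<in> ?fam" "t \<in> H" by blast
    show "t \<in> G"
    proof (rule ccontr)
      assume tG: "t \<notin> G"
      then have HG: "H \<noteq> G" using H(2) by blast
      have HGd: "H \<inter> G = {}" by (rule disj[OF H(1) G(1) HG])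
      have Hf: "H face_of ?P" using H(1) unfolding daughter_family_def by auto
      obtain a b where ab: "?P \<subseteq> {x. a \<bullet> x \<le> b}" "H = ?P \<inter> {x. a \<bullet> x = b}"
        using exposed_ch[OF fin Hf] by blast
      have PS_ne: "Pt \<inter> S \<noteq> {}" by (rule face_meets_Pt[OF fin Sf Sne])
      have PS_fin: "finite (Pt \<inter> S)" using fin by simp
      define \<mu> where "\<mu> = Max ((\<lambda>x. a \<bullet> x - b) ` (Pt \<inter> S))"
      have \<mu>_in: "\<mu> \<in> (\<lambda>x. a \<bullet> x - b) ` (Pt \<inter> S)"
        unfolding \<mu>_def using PS_fin PS_ne by (intro Max_in) auto
      then obtain s where s: "s \<in> Pt" "s \<in> S" "a \<bullet> s - b = \<mu>" by blast
      have \<mu>_ge: "\<And>x. x \<in> Pt \<Longrightarrow> x \<in> S \<Longrightarrow> a \<bullet> x - b \<le> \<mu>"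
        unfolding \<mu>_def using PS_fin by (intro Max_ge) auto
      have sP: "s \<in> ?P" using s(1) by (rule hull_inc)
      have "a \<bullet> s \<noteq> b"
      proof
        assume "a \<bullet> s = b"
        then have "s \<in> H" using ab(2) sP by simp
        moreover have "s \<in> G" using s(2) G(2) by blast
        ultimately show False using HGd by blast
      qed
      moreover have "a \<bullet> s \<le> b" using ab(1) sP by blast
      ultimately have \<mu>neg: "\<mu> < 0" using s(3) by simp
      have mneg: "m < 0" using neg[OF tP(1,2)] tP(3) by simp
      define lam where "lam = m / \<mu>"
      have lpos: "lam > 0" unfolding lam_def using \<mu>neg mneg by (simp add: divide_neg_neg)
      have lmu: "lam * \<mu> = m" unfolding lam_def using \<mu>neg by simp
      define \<psi> where "\<psi> = (\<lambda>x. e x + lam * (a \<bullet> x - b))"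
      have \<psi>_lin: "\<And>x. \<psi> x = (w + lam *\<^sub>R a) \<bullet> x + (c - lam * b)"
        unfolding \<psi>_def e by (simp add: inner_add_left algebra_simps)
      have \<psi>_le: "\<And>x. x \<in> Pt \<Longrightarrow> \<psi> x \<le> m"
      proof -
        fix x assume x: "x \<in> Pt"
        have xP: "x \<in> ?P" using x by (rule hull_inc)
        have axb: "a \<bullet> x - b \<le> 0" using ab(1) xP by auto
        show "\<psi> x \<le> m"
        proof (cases "x \<in> S")
          case True
          have "lam * (a \<bullet> x - b) \<le> lam * \<mu>"
            using \<mu>_ge[OF x True] lpos by (intro mult_left_mono) auto
          then show ?thesis unfolding \<psi>_def using e0[OF True] lmu by simp
        next
          case False
          have "lam * (a \<bullet> x - b) \<le> 0" using axb lpos by (simp add: mult_nonneg_nonpos)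
          then show ?thesis unfolding \<psi>_def using le[OF x False] by simp
        qed
      qed
      have \<psi>_lt: "\<And>x. x \<in> Pt \<Longrightarrow> x \<notin> S \<Longrightarrow> x \<notin> T \<Longrightarrow> \<psi> x < m"
      proof -
        fix x assume x: "x \<in> Pt" "x \<notin> S" "x \<notin> T"
        have xP: "x \<in> ?P" using x(1) by (rule hull_inc)
        have axb: "a \<bullet> x - b \<le> 0" using ab(1) xP by auto
        have "lam * (a \<bullet> x - b) \<le> 0" using axb lpos by (simp add: mult_nonneg_nonpos)
        moreover have "e x < m" using le[OF x(1,2)] x T by auto
        ultimately show "\<psi> x < m" unfolding \<psi>_def by simp
      qed
      define F where "F = ?P \<inter> {x. (w + lam *\<^sub>R a) \<bullet> x = m - (c - lam * b)}"
      have Ple: "?P \<subseteq> {x. (w + lam *\<^sub>R a) \<bullet> x \<le> m - (c - lam * b)}"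
      proof (rule hull_minimal)
        show "Pt \<subseteq> {x. (w + lam *\<^sub>R a) \<bullet> x \<le> m - (c - lam * b)}"
        proof
          fix x assume x: "x \<in> Pt"
          have "\<psi> x \<le> m" by (rule \<psi>_le[OF x])
          then show "x \<in> {x. (w + lam *\<^sub>R a) \<bullet> x \<le> m - (c - lam * b)}"
            using \<psi>_lin[of x] by simp
        qed
        show "convex {x. (w + lam *\<^sub>R a) \<bullet> x \<le> m - (c - lam * b)}" by (rule convex_halfspace_le)
      qed
      have Ff: "F face_of ?P" unfolding F_def
        by (rule face_of_Int_supporting_hyperplane_le) (use Ple in auto)
      have tH: "a \<bullet> t = b" using H(2) ab(2) by simp
      have tF: "t \<in> F" unfolding F_def
      proof -
        have "\<psi> t = m" unfolding \<psi>_def using tP(3) tH by simp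
        moreover have "t \<in> ?P" using tP(1) by (rule hull_inc)
        ultimately show "t \<in> ?P \<inter> {x. (w + lam *\<^sub>R a) \<bullet> x = m - (c - lam * b)}"
          using \<psi>_lin[of t] by simp
      qed
      have sF: "s \<in> F" unfolding F_def
      proof -
        have "\<psi> s = m" unfolding \<psi>_def using e0[OF s(2)] s(3) lmu by simp
        then show "s \<in> ?P \<inter> {x. (w + lam *\<^sub>R a) \<bullet> x = m - (c - lam * b)}"
          using \<psi>_lin[of s] sP by simp
      qed
      have Dlt: "D \<subseteq> {x. (w + lam *\<^sub>R a) \<bullet> x < m - (c - lam * b)}"
        unfolding Deq
      proof (rule hull_minimal)
        show "convex {x. (w + lam *\<^sub>R a) \<bullet> x < m - (c - lam * b)}" by (rule convex_halfspace_lt)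
        show "Vs \<subseteq> {x. (w + lam *\<^sub>R a) \<bullet> x < m - (c - lam * b)}"
        proof
          fix v assume v0: "v \<in> Vs"
          then have v: "v \<in> Pt" unfolding Vs_def by blast
          have vD: "v \<in> D" using v0 VD by blast
          have "v \<notin> S" using vD SD by blast
          moreover have "v \<notin> T" using vD DT by blast
          ultimately have "\<psi> v < m" using \<psi>_lt v by blast
          then show "v \<in> {x. (w + lam *\<^sub>R a) \<bullet> x < m - (c - lam * b)}" using \<psi>_lin[of v] by simp
        qed
      qed
      have FD: "F \<inter> D = {}" using Dlt unfolding F_def by auto
      obtain F' where F': "F' \<in> ?fam" "F \<subseteq> F'" using fam_ext[OF fin Ff FD] by blast
      have "F' = H"
      proof (rule ccontr)
        assume "F' \<noteq> H"
        then have "F' \<inter> H = {}" by (rule disj[OF F'(1) H(1)])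
        then show False using tF F'(2) H(2) by blast
      qed
      moreover have "F' = G"
      proof (rule ccontr)
        assume "F' \<noteq> G"
        then have "F' \<inter> G = {}" by (rule disj[OF F'(1) G(1)])
        then show False using sF F'(2) s(2) G(2) by blast
      qed
      ultimately show False using HG by simp
    qed
  qed
  then show ?thesis using Gf G(2) by blast
qed


theorem corollary4p3:
  fixes Pt :: "(real^'n) set" and D :: "nat \<Rightarrow> (real^'n) set" and S :: "(real^'n) set"
    and \<xi> :: "real^'n"
  assumes "finite Pt"
    and "\<forall>x\<in>Pt. \<forall>i. x $ i \<in> \<int>"
    and "semi_interlaced Pt D"
    and "suture Pt D S"
    and "argmax_set \<xi> (piS S ` (convex hull Pt)) = O_S S"
  shows "aff_dim (argmax_set \<xi> (P_S Pt S - O_S S)) + 1 \<le>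
    int (card {j\<in>{1..CARD('n)}. D j \<inter> S = {} \<and>
              piS S ` (D j) \<inter> argmax_set \<xi> (P_S Pt S - O_S S) \<noteq> {}})"
proof -
  let ?P = "convex hull Pt"
  let ?N = "CARD('n)"
  have dp: "\<And>i. i \<in> {1..?N} \<Longrightarrow> daughter_polytope Pt (D i)"
    using assms(3) unfolding semi_interlaced_def by blast
  have si: "\<And>F. F face_of ?P \<Longrightarrow> aff_dim F \<le> int (card {i\<in>{1..?N}. D i \<inter> F \<noteq> {}})"
    using assms(3) unfolding semi_interlaced_def by blast
  have Sf: "S face_of ?P" using assms(4) unfolding suture_def by blast
  have Sdim: "aff_dim S = int (card {i\<in>{1..?N}. D i \<inter> S \<noteq> {}})"
    using assms(4) unfolding suture_def by blast
  have Sne: "S \<noteq> {}"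
  proof
    assume "S = {}"
    then have "aff_dim S = -1" by simp
    with Sdim show False by simp
  qed
  obtain s0 where s0: "s0 \<in> S" using Sne by blast
  obtain w c where wc: "\<And>x. \<xi> \<bullet> piS S x = w \<bullet> x + c" using e_rep[OF s0, of \<xi>] by blast
  define e where "e = (\<lambda>x. \<xi> \<bullet> piS S x)"
  have e_lin: "\<And>x. e x = w \<bullet> x + c" unfolding e_def by (rule wc)
  have pi0: "\<And>x. x \<in> S \<Longrightarrow> piS S x = 0" by (rule piS_self[OF hs])
  have e0: "\<And>x. x \<in> S \<Longrightarrow> e x = 0" unfolding e_def using pi0 by simp
  have OS: "O_S S = {0}" unfolding O_S_def using pi0 Sne by auto
  have SP: "S \<subseteq> ?P" by (rule face_of_imp_subset[OF Sf])
  have argmax: "argmax_set \<xi> (piS S ` ?P) = {0}" using assms(5) OS by simp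
  have neg: "\<And>x. x \<in> Pt \<Longrightarrow> x \<notin> S \<Longrightarrow> e x < 0"
  proof -
    fix x assume x: "x \<in> Pt" "x \<notin> S"
    have xP: "x \<in> ?P" using x(1) by (rule hull_inc)
    have "0 \<in> argmax_set \<xi> (piS S ` ?P)" using argmax by simp
    then have all: "\<forall>y\<in>piS S ` ?P. \<xi> \<bullet> y \<le> 0" unfolding argmax_set_def by simp
    have le0: "e x \<le> 0" unfolding e_def using all xP by blast
    have "e x \<noteq> 0"
    proof
      assume ex: "e x = 0"
      have "piS S x \<in> argmax_set \<xi> (piS S ` ?P)"
        unfolding argmax_set_def using all xP ex unfolding e_def by auto
      then have "piS S x = 0" using argmax by simp
      then have "closest_point (affine hull S) x = x" unfolding piS_def by simp
      then have "x \<in> affine hull S" using cp_in[OF Sne, of x] by simp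
      then have "x \<in> S" by (rule face_aff[OF assms(1) Sf xP])
      with x(2) show False by simp
    qed
    with le0 show "e x < 0" by simp
  qed
  show ?thesis
  proof (cases "Pt - S = {}")
    case True
    have E: "P_S Pt S - O_S S = {}"
    proof -
      have "P_S Pt S \<subseteq> piS S ` Pt" unfolding P_S_def by blast
      moreover have "piS S ` Pt \<subseteq> {0}" using True pi0 by auto
      ultimately show ?thesis using OS by auto
    qed
    have "argmax_set \<xi> (P_S Pt S - O_S S) = {}" unfolding E argmax_set_def by simp
    then show ?thesis by simp
  next
    case False
    have finPS: "finite (Pt - S)" using assms(1) by simp
    define m where "m = Max (e ` (Pt - S))"
    define T where "T = {x\<in>Pt. x \<notin> S \<and> e x = m}"
    have m_in: "m \<in> e ` (Pt - S)" unfolding m_def using finPS False by (intro Max_in) auto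
    have le: "\<And>x. x \<in> Pt \<Longrightarrow> x \<notin> S \<Longrightarrow> e x \<le> m"
      unfolding m_def using finPS by (intro Max_ge) auto
    obtain t0 where t0: "t0 \<in> T" using m_in unfolding T_def by auto
    have mneg: "m < 0" using m_in neg by auto
    have piT: "\<And>t. t \<in> T \<Longrightarrow> \<xi> \<bullet> piS S t = m" unfolding T_def e_def by auto
    let ?L = "\<lambda>x. piS S (x + s0)"
    have linL: "linear ?L" by (rule piS_linear[OF s0])
    have convle: "\<And>z. z \<in> convex hull (Pt - S) \<Longrightarrow> e z \<le> m"
    proof -
      fix z assume z: "z \<in> convex hull (Pt - S)"
      have "convex hull (Pt - S) \<subseteq> {x. w \<bullet> x \<le> m - c}"
      proof (rule hull_minimal)
        show "Pt - S \<subseteq> {x. w \<bullet> x \<le> m - c}"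
        proof
          fix x assume "x \<in> Pt - S"
          then have "e x \<le> m" using le by blast
          then show "x \<in> {x. w \<bullet> x \<le> m - c}" using e_lin[of x] by simp
        qed
        show "convex {x. w \<bullet> x \<le> m - c}" by (rule convex_halfspace_le)
      qed
      then show "e z \<le> m" using z e_lin[of z] by auto
    qed
    have inPS: "\<And>t. t \<in> T \<Longrightarrow> piS S t \<in> P_S Pt S - O_S S"
    proof -
      fix t assume t: "t \<in> T"
      have tPt: "t \<in> Pt" and tm: "e t = m" using t unfolding T_def by auto
      have tP: "t \<in> ?P" using tPt by (rule hull_inc)
      have s0P: "s0 \<in> ?P" using s0 SP by blast
      define q where "q = piS S t"
      have qm: "\<xi> \<bullet> q = m" using tm unfolding e_def q_def .
      have qne: "q \<noteq> 0" using qm mneg by auto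
      have "q \<in> closure (piS S ` ?P - piS S ` (convex hull (Pt - S)))"
        unfolding closure_approachable
      proof (intro allI impI)
        fix \<epsilon> :: real assume \<epsilon>: "\<epsilon> > 0"
        define \<delta> where "\<delta> = min (1/2) (\<epsilon> / (2 * (norm q + 1)))"
        have np: "norm q + 1 > 0" by (simp add: add_nonneg_pos)
        have \<delta>pos: "\<delta> > 0" unfolding \<delta>_def using \<epsilon> np by simp
        have \<delta>le: "\<delta> \<le> 1/2" unfolding \<delta>_def by (rule min.cobounded1)
        have \<delta>e: "\<delta> \<le> \<epsilon> / (2 * (norm q + 1))" unfolding \<delta>_def by simp
        then have "\<delta> * (2 * (norm q + 1)) \<le> \<epsilon>" using np by (simp add: le_divide_eq)
        moreover have "\<delta> * norm q < \<delta> * (2 * (norm q + 1))"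
        proof -
          have d2: "2 * (norm q + 1) = 2 * norm q + 2" by (simp add: distrib_left)
          have nq: "norm q < 2 * (norm q + 1)" unfolding d2 using np by linarith
          show ?thesis by (rule mult_strict_left_mono[OF nq \<delta>pos])
        qed
        ultimately have \<delta>q: "\<delta> * norm q < \<epsilon>" by linarith
        define z where "z = (1 - \<delta>) *\<^sub>R t + \<delta> *\<^sub>R s0"
        have zP: "z \<in> ?P" unfolding z_def
          by (rule convexD[OF convex_convex_hull tP s0P]) (use \<delta>pos \<delta>le in auto)
        have zs: "z - s0 = (1 - \<delta>) *\<^sub>R (t - s0)" unfolding z_def by (simp add: algebra_simps)
        have piz: "piS S z = (1 - \<delta>) *\<^sub>R q"
        proof -
          have "piS S z = ?L (z - s0)" by simp
          also have "\<dots> = ?L ((1 - \<delta>) *\<^sub>R (t - s0))" unfolding zs ..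
          also have "\<dots> = (1 - \<delta>) *\<^sub>R ?L (t - s0)" by (rule linear_scale[OF linL])
          also have "?L (t - s0) = q" unfolding q_def by simp
          finally show ?thesis .
        qed
        define y where "y = (1 - \<delta>) *\<^sub>R q"
        have y1: "y \<in> piS S ` ?P" unfolding y_def using zP piz by (metis rev_image_eqI)
        have y2: "y \<notin> piS S ` (convex hull (Pt - S))"
        proof
          assume "y \<in> piS S ` (convex hull (Pt - S))"
          then obtain z' where z': "z' \<in> convex hull (Pt - S)" "y = piS S z'" by blast
          have "e z' \<le> m" by (rule convle[OF z'(1)])
          moreover have "e z' = (1 - \<delta>) * m" unfolding e_def using z'(2)[symmetric] qm y_def by simp
          moreover have "\<delta> * m < 0" by (rule mult_pos_neg[OF \<delta>pos mneg])
          moreover have "(1 - \<delta>) * m = m - \<delta> * m" by (simp add: algebra_simps)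
          ultimately show False by linarith
        qed
        have "y - q = (- \<delta>) *\<^sub>R q" unfolding y_def by (simp add: algebra_simps)
        then have dq: "dist y q = \<delta> * norm q" using \<delta>pos by (simp add: dist_norm)
        have ymem: "y \<in> piS S ` ?P - piS S ` (convex hull (Pt - S))" using y1 y2 by (rule DiffI)
        have dyq: "dist y q < \<epsilon>" using dq \<delta>q by simp
        show "\<exists>y\<in>piS S ` ?P - piS S ` (convex hull (Pt - S)). dist y q < \<epsilon>"
          using ymem dyq by blast
      qed
      moreover have "q \<in> piS S ` Pt" unfolding q_def using tPt by blast
      ultimately have "q \<in> P_S Pt S" unfolding P_S_def by blast
      then show "piS S t \<in> P_S Pt S - O_S S" using qne OS unfolding q_def by simp
    qed
    have PS_char: "\<And>y. y \<in> P_S Pt S - O_S S \<Longrightarrow> \<exists>x\<in>Pt. x \<notin> S \<and> y = piS S x"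
    proof -
      fix y assume y: "y \<in> P_S Pt S - O_S S"
      then obtain x where x: "x \<in> Pt" "y = piS S x" unfolding P_S_def by blast
      have "y \<noteq> 0" using y OS by simp
      then have "x \<notin> S" using x(2) pi0 by auto
      then show "\<exists>x\<in>Pt. x \<notin> S \<and> y = piS S x" using x by blast
    qed
    have A_eq: "argmax_set \<xi> (P_S Pt S - O_S S) = piS S ` T"
    proof
      show "argmax_set \<xi> (P_S Pt S - O_S S) \<subseteq> piS S ` T"
      proof
        fix y assume y: "y \<in> argmax_set \<xi> (P_S Pt S - O_S S)"
        then have y1: "y \<in> P_S Pt S - O_S S"
          and y2: "\<forall>z\<in>P_S Pt S - O_S S. \<xi> \<bullet> z \<le> \<xi> \<bullet> y" unfolding argmax_set_def by auto
        obtain x where x: "x \<in> Pt" "x \<notin> S" "y = piS S x" using PS_char[OF y1] by blast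
        have "\<xi> \<bullet> piS S t0 \<le> \<xi> \<bullet> y" using y2 inPS[OF t0] by blast
        then have "m \<le> e x" using piT[OF t0] x(3) unfolding e_def by simp
        moreover have "e x \<le> m" by (rule le[OF x(1,2)])
        ultimately have "e x = m" by simp
        then have "x \<in> T" unfolding T_def using x by simp
        then show "y \<in> piS S ` T" using x(3) by blast
      qed
      show "piS S ` T \<subseteq> argmax_set \<xi> (P_S Pt S - O_S S)"
      proof
        fix y assume "y \<in> piS S ` T"
        then obtain t where t: "t \<in> T" "y = piS S t" by blast
        have "\<forall>z\<in>P_S Pt S - O_S S. \<xi> \<bullet> z \<le> \<xi> \<bullet> y"
        proof
          fix z assume z: "z \<in> P_S Pt S - O_S S"
          obtain x where x: "x \<in> Pt" "x \<notin> S" "z = piS S x" using PS_char[OF z] by blast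
          have "e x \<le> m" by (rule le[OF x(1,2)])
          then show "\<xi> \<bullet> z \<le> \<xi> \<bullet> y" using piT[OF t(1)] t(2) x(3) unfolding e_def by simp
        qed
        then show "y \<in> argmax_set \<xi> (P_S Pt S - O_S S)"
          unfolding argmax_set_def using inPS[OF t(1)] t(2) by simp
      qed
    qed
    have dimT: "aff_dim (piS S ` T) + 1 + aff_dim S \<le> aff_dim (S \<union> T)"
    proof (rule dim_proj[OF Sne, where m=m and X=T and \<xi>=\<xi>])
      show "m \<noteq> 0" using mneg by simp
      show "\<forall>x\<in>T. \<xi> \<bullet> piS S x = m" using piT by blast
    qed
    define K where "K = \<Inter>{G. G face_of ?P \<and> S \<union> T \<subseteq> G}"
    have TP: "T \<subseteq> ?P" unfolding T_def using hull_subset[of Pt convex] by blast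
    have Kf: "K face_of ?P" unfolding K_def
    proof (rule face_of_Inter)
      have "?P face_of ?P" by (rule face_of_refl[OF convex_convex_hull])
      then show "{G. G face_of ?P \<and> S \<union> T \<subseteq> G} \<noteq> {}" using SP TP by blast
    qed blast
    have STK: "S \<union> T \<subseteq> K" unfolding K_def by blast
    have KD: "\<And>j. j \<in> {1..?N} \<Longrightarrow> D j \<inter> S = {} \<Longrightarrow> D j \<inter> T = {} \<Longrightarrow> D j \<inter> K = {}"
    proof -
      fix j assume j: "j \<in> {1..?N}" "D j \<inter> S = {}" "D j \<inter> T = {}"
      have SDj: "S \<inter> D j = {}" using j(2) by blast
      obtain G where G: "G face_of ?P" "G \<inter> D j = {}" "S \<subseteq> G" "T \<subseteq> G"
        using daughter_key[OF assms(1) dp[OF j(1)] Sf Sne SDj e_lin e0 neg le T_def j(3)] by blast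
      have "K \<subseteq> G" unfolding K_def using G by blast
      then show "D j \<inter> K = {}" using G(2) by blast
    qed
    define I where "I = {i\<in>{1..?N}. D i \<inter> S \<noteq> {}}"
    define JT where "JT = {j\<in>{1..?N}. D j \<inter> S = {} \<and> D j \<inter> T \<noteq> {}}"
    define KS where "KS = {i\<in>{1..?N}. D i \<inter> K \<noteq> {}}"
    define GS where "GS = {j\<in>{1..?N}. D j \<inter> S = {} \<and>
              piS S ` (D j) \<inter> argmax_set \<xi> (P_S Pt S - O_S S) \<noteq> {}}"
    have finI: "finite I" unfolding I_def by simp
    have finJT: "finite JT" unfolding JT_def by simp
    have finGS: "finite GS" unfolding GS_def by simp
    have c1: "aff_dim K \<le> int (card KS)" unfolding KS_def by (rule si[OF Kf])
    have c2: "KS \<subseteq> I \<union> JT" unfolding KS_def I_def JT_def using KD by blast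
    have c3: "card KS \<le> card (I \<union> JT)" by (rule card_mono) (use finI finJT c2 in auto)
    have c4: "card (I \<union> JT) \<le> card I + card JT" by (rule card_Un_le)
    have c5: "JT \<subseteq> GS"
    proof
      fix j assume "j \<in> JT"
      then have j: "j \<in> {1..?N}" "D j \<inter> S = {}" "D j \<inter> T \<noteq> {}" unfolding JT_def by auto
      then obtain t where t: "t \<in> D j" "t \<in> T" by blast
      have "piS S t \<in> piS S ` D j \<inter> argmax_set \<xi> (P_S Pt S - O_S S)" using t A_eq by auto
      then show "j \<in> GS" unfolding GS_def using j by blast
    qed
    have c6: "card JT \<le> card GS" by (rule card_mono[OF finGS c5])
    have c7: "aff_dim (S \<union> T) \<le> aff_dim K" by (rule aff_dim_subset[OF STK])
    have SdimI: "aff_dim S = int (card I)" using Sdim unfolding I_def .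
    have nat_ineq: "card KS \<le> card I + card GS" using c3 c4 c6 by linarith
    then have int_ineq: "int (card KS) \<le> int (card I) + int (card GS)" by linarith
    have A_dim: "aff_dim (argmax_set \<xi> (P_S Pt S - O_S S)) = aff_dim (piS S ` T)" using A_eq by simp
    have "aff_dim (argmax_set \<xi> (P_S Pt S - O_S S)) + 1 \<le> int (card GS)"
      using A_dim dimT c1 c7 SdimI int_ineq by linarith
    then show ?thesis unfolding GS_def .
  qed
qed

end
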